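(* Let $\ell \ge q \ge 1$. Let $\mathbf{z} \in \mathbb{R}^{\ell}$ (the observations), let $\boldsymbol\Gamma_q$ be a real $\ell \times q$ matrix of full column rank (the truncated basis), and let $\boldsymbol\Sigma_{\mathbf{e}}, \boldsymbol\Sigma_{\boldsymbol\eta}$ be $\ell\times\ell$ symmetric positive definite matrices (observation error and model discrepancy variances). For an input $\mathbf{x}$, let $\mathrm{E}[\mathbf{c}(\mathbf{x})] \in \mathbb{R}^q$ and let $\mathrm{Var}[\mathbf{c}(\mathbf{x})]$ be a $q\times q$ symmetric positive semidefinite matrix (emulator mean and variance of the basis coefficients), and set $\mathrm{E}[f(\mathbf{x})] = \boldsymbol\Gamma_q \mathrm{E}[\mathbf{c}(\mathbf{x})]$ and $\mathrm{Var}[f(\mathbf{x})] = \boldsymbol\Gamma_q \mathrm{Var}[\mathbf{c}(\mathbf{x})] \boldsymbol\Gamma_q^T$. Define the field implausibility $$\mathcal{I}(\mathbf{x}) = (\mathbf{z} - \mathrm{E}[f(\mathbf{x})])^{T}\big(\mathrm{Var}[f(\mathbf{x})] + \boldsymbol\Sigma_{\mathbf{e}} + \boldsymbol\Sigma_{\boldsymbol\eta}\big)^{-1} (\mathbf{z} - \mathrm{E}[f(\mathbf{x})]).$$ Let $\mathbf{W} = \boldsymbol\Sigma_{\mathbf{e}} + \boldsymbol\Sigma_{\boldsymbol\eta}$ and $\boldsymbol\Psi = \boldsymbol\Gamma_q^T \mathbf{W}^{-1}\boldsymbol\Gamma_q$. Define the reconstruction error $$\mathcal{R}_{\mathbf{W}}(\boldsymbol\Gamma_q,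 \mathbf{z}) = \big(\mathbf{z} - \boldsymbol\Gamma_q \boldsymbol\Psi^{-1}\boldsymbol\Gamma_q^T\mathbf{W}^{-1}\mathbf{z}\big)^T \mathbf{W}^{-1}\big(\mathbf{z} - \boldsymbol\Gamma_q \boldsymbol\Psi^{-1}\boldsymbol\Gamma_q^T\mathbf{W}^{-1}\mathbf{z}\big),$$ the projected quantities $\mathbf{c}(\mathbf{z}) = \boldsymbol\Psi^{-1}\boldsymbol\Gamma_q^T\mathbf{W}^{-1}\mathbf{z}$, $\mathrm{Var}[\mathbf{c}(\mathbf{e})] = \boldsymbol\Psi^{-1}\boldsymbol\Gamma_q^T\mathbf{W}^{-1}\boldsymbol\Sigma_{\mathbf{e}}\mathbf{W}^{-1}\boldsymbol\Gamma_q\boldsymbol\Psi^{-T}$, $\mathrm{Var}[\mathbf{c}(\boldsymbol\eta)] = \boldsymbol\Psi^{-1}\boldsymbol\Gamma_q^T\mathbf{W}^{-1}\boldsymbol\Sigma_{\boldsymbol\eta}\mathbf{W}^{-1}\boldsymbol\Gamma_q\boldsymbol\Psi^{-T}$, and the coefficient implausibility $$\tilde{\mathcal{I}}_{\mathbf{W}}(\mathbf{x}) = (\mathbf{c}(\mathbf{z}) - \mathrm{E}[\mathbf{c}(\mathbf{x})])^{T}\big(\mathrm{Var}[\mathbf{c}(\mathbf{x})] + \mathrm{Var}[\mathbf{c}(\mathbf{e})] + \mathrm{Var}[\mathbf{c}(\boldsymbol\eta)]\big)^{-1} (\mathbf{c}(\mathbf{z}) - \mathrm{E}[\mathbf{c}(\mathbf{x})]).$$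 Then $$\mathcal{I}(\mathbf{x}) = \mathcal{R}_{\mathbf{W}}(\boldsymbol\Gamma_q, \mathbf{z}) + \tilde{\mathcal{I}}_{\mathbf{W}}(\mathbf{x}).$$
   Context: This is the setting of history matching a computer model with $\ell$-dimensional output $f(\mathbf{x})$ emulated through coefficients on a $q$-dimensional basis $\boldsymbol\Gamma_q$ (columns are basis vectors), with statistical model $\mathbf{z} = f(\mathbf{x}^* ) + \boldsymbol\eta + \mathbf{e}$, where $\boldsymbol\eta$ and $\mathbf{e}$ are uncorrelated mean-zero terms with variances $\boldsymbol\Sigma_{\boldsymbol\eta}$ and $\boldsymbol\Sigma_{\mathbf{e}}$. All projections of $\ell$-dimensional quantities onto the basis are performed in the weighted norm with weight matrix $\mathbf{W}$, i.e. a vector $\mathbf{v}$ is projected to coefficients $(\boldsymbol\Gamma_q^T\mathbf{W}^{-1}\boldsymbol\Gamma_q)^{-1}\boldsymbol\Gamma_q^T\mathbf{W}^{-1}\mathbf{v}$. *)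

theory Defs
  imports "HOL-Analysis.Analysis"
begin

definition sym_pos_def :: "real^'n^'n \<Rightarrow> bool" where
  "sym_pos_def A \<longleftrightarrow> transpose A = A \<and> (\<forall>v. v \<noteq> 0 \<longrightarrow> v \<bullet> (A *v v) > 0)"

definition sym_pos_semidef :: "real^'n^'n \<Rightarrow> bool" where
  "sym_pos_semidef A \<longleftrightarrow> transpose A = A \<and> (\<forall>v. v \<bullet> (A *v v) \<ge> 0)"

definition qform :: "real^'n \<Rightarrow> real^'n^'n \<Rightarrow> real" where
  "qform v M = v \<bullet> (M *v v)"

end

theory Submission imports Defs begin


lemma inv_props:
  fixes A :: "real^'n^'n"
  assumes "invertible A"
  shows "A ** matrix_inv A = mat 1" "matrix_inv A ** A = mat 1"
proof -
  have "\<exists>A'. A ** A' = mat 1 \<and> A' ** A = mat 1" using assms by (simp add: invertible_def)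
  then have "A ** matrix_inv A = mat 1 \<and> matrix_inv A ** A = mat 1"
    unfolding matrix_inv_def by (rule someI_ex)
  then show "A ** matrix_inv A = mat 1" "matrix_inv A ** A = mat 1" by auto
qed

lemma inv_apply_l:
  fixes A :: "real^'n^'n"
  assumes "invertible A" shows "matrix_inv A *v (A *v x) = x"
  by (simp add: matrix_vector_mul_assoc inv_props[OF assms])

lemma inv_apply_r:
  fixes A :: "real^'n^'n"
  assumes "invertible A" shows "A *v (matrix_inv A *v x) = x"
  by (simp add: matrix_vector_mul_assoc inv_props[OF assms])

lemma inv_solve:
  fixes A :: "real^'n^'n"
  assumes "invertible A" "A *v y = u" shows "matrix_inv A *v u = y"
  using inv_apply_l[OF assms(1), of y] assms(2) by simp

lemma dot_transpose:
  fixes A :: "real^'n^'m"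
  shows "x \<bullet> (transpose A *v y) = (A *v x) \<bullet> y"
  by (metis dot_lmul_matrix inner_commute transpose_matrix_vector)

lemma pd_invertible:
  fixes A :: "real^'n^'n"
  assumes "\<And>v. v \<noteq> 0 \<Longrightarrow> v \<bullet> (A *v v) > 0"
  shows "invertible A"
proof -
  have "\<forall>x. A *v x = 0 \<longrightarrow> x = 0"
    using assms by (metis inner_zero_right less_irrefl)
  then show ?thesis
    by (simp add: invertible_left_inverse matrix_left_invertible_ker)
qed

lemma sym_inv:
  fixes A :: "real^'n^'n"
  assumes "invertible A" "transpose A = A"
  shows "transpose (matrix_inv A) = matrix_inv A"
proof -
  have "transpose (matrix_inv A) ** A = mat 1"
    by (metis assms(2) inv_props(1)[OF assms(1)] matrix_transpose_mul transpose_mat)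
  then have "transpose (matrix_inv A) ** A ** matrix_inv A = matrix_inv A" by simp
  then show ?thesis by (simp add: matrix_mul_assoc[symmetric] inv_props[OF assms(1)])
qed

lemma pd_inv_pd:
  fixes A :: "real^'n^'n"
  assumes "invertible A" "\<And>v. v \<noteq> 0 \<Longrightarrow> v \<bullet> (A *v v) > 0"
  shows "v \<noteq> 0 \<Longrightarrow> v \<bullet> (matrix_inv A *v v) > 0"
proof -
  assume v: "v \<noteq> 0"
  define w where "w = matrix_inv A *v v"
  have Aw: "A *v w = v" unfolding w_def by (rule inv_apply_r[OF assms(1)])
  then have "w \<noteq> 0" using v by auto
  then have "w \<bullet> (A *v w) > 0" by (rule assms(2))
  then show ?thesis using Aw by (simp add: w_def inner_commute)
qed



declare transpose_matrix_vector[simp del]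

theorem theorem1:
  fixes z :: "real^'l"
    and Gamma :: "real^'q^'l"
    and Sigma_e Sigma_eta :: "real^'l^'l"
    and Ec :: "real^'q"
    and Varc :: "real^'q^'q"
  assumes dims: "CARD('q) \<le> CARD('l)"
    and rank: "rank Gamma = CARD('q)"
    and Se: "sym_pos_def Sigma_e"
    and Seta: "sym_pos_def Sigma_eta"
    and Vc: "sym_pos_semidef Varc"
  shows
    "let Ef = Gamma *v Ec;
         Varf = Gamma ** Varc ** transpose Gamma;
         W = Sigma_e + Sigma_eta;
         Wi = matrix_inv W;
         Psi = transpose Gamma ** Wi ** Gamma;
         Psii = matrix_inv Psi;
         I = qform (z - Ef) (matrix_inv (Varf + Sigma_e + Sigma_eta));
         r = z - Gamma *v (Psii *v (transpose Gamma *v (Wi *v z)));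
         R = qform r Wi;
         cz = Psii *v (transpose Gamma *v (Wi *v z));
         Vce = Psii ** transpose Gamma ** Wi ** Sigma_e ** Wi ** Gamma ** transpose Psii;
         Vceta = Psii ** transpose Gamma ** Wi ** Sigma_eta ** Wi ** Gamma ** transpose Psii;
         It = qform (cz - Ec) (matrix_inv (Varc + Vce + Vceta))
     in I = R + It"
  proof -
  define W where "W = Sigma_e + Sigma_eta"
  define Wi where "Wi = matrix_inv W"
  define Psi where "Psi = transpose Gamma ** Wi ** Gamma"
  define Psii where "Psii = matrix_inv Psi"
  define M where "M = Gamma ** Varc ** transpose Gamma + Sigma_e + Sigma_eta"
  define cz where "cz = Psii *v (transpose Gamma *v (Wi *v z))"
  define r where "r = z - Gamma *v cz"
  define d where "d = cz - Ec"
  define Vce where "Vce = Psii ** transpose Gamma ** Wi ** Sigma_e ** Wi ** Gamma ** transpose Psii"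
  define Vceta where "Vceta = Psii ** transpose Gamma ** Wi ** Sigma_eta ** Wi ** Gamma ** transpose Psii"
  define S where "S = Varc + Psii"
  define Si where "Si = matrix_inv S"
  note mva = matrix_vector_mul_assoc[symmetric]
  have Wsym: "transpose W = W" using Se Seta unfolding W_def sym_pos_def_def
    by (simp add: transpose_def vec_eq_iff)
  have Wpd: "v \<bullet> (W *v v) > 0" if "v \<noteq> 0" for v
  proof -
    have "v \<bullet> (Sigma_e *v v) > 0" "v \<bullet> (Sigma_eta *v v) > 0"
      using Se Seta that unfolding sym_pos_def_def by auto
    then show ?thesis by (simp add: W_def matrix_vector_mult_add_rdistrib inner_add_right)
  qed
  have Winv: "invertible W" using Wpd pd_invertible by blast
  have Wisym: "transpose Wi = Wi" unfolding Wi_def by (rule sym_inv[OF Winv Wsym])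
  have Wipd: "v \<bullet> (Wi *v v) > 0" if "v \<noteq> 0" for v
    unfolding Wi_def using pd_inv_pd[OF Winv Wpd that] .
  have Ginj: "Gamma *v v = 0 \<Longrightarrow> v = 0" for v
    using rank unfolding full_rank_injective by (metis inj_eq matrix_vector_mult_0_right)
  have Psisym: "transpose Psi = Psi" unfolding Psi_def
    by (simp add: matrix_transpose_mul Wisym matrix_mul_assoc)
  have Psiv: "Psi *v v = transpose Gamma *v (Wi *v (Gamma *v v))" for v
    by (simp only: Psi_def mva)
  have Psipd: "v \<bullet> (Psi *v v) > 0" if "v \<noteq> 0" for v
  proof -
    have "Gamma *v v \<noteq> 0" using Ginj that by blast
    then show ?thesis using Wipd unfolding Psiv dot_transpose by blast
  qed
  have Psiinv: "invertible Psi" using Psipd pd_invertible by blast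
  have Psiisym: "transpose Psii = Psii" unfolding Psii_def by (rule sym_inv[OF Psiinv Psisym])
  have Psiipd: "v \<bullet> (Psii *v v) > 0" if "v \<noteq> 0" for v
    unfolding Psii_def using pd_inv_pd[OF Psiinv Psipd that] .
  have Vpsd: "v \<bullet> (Varc *v v) \<ge> 0" for v using Vc unfolding sym_pos_semidef_def by auto
  have Spd: "v \<bullet> (S *v v) > 0" if "v \<noteq> 0" for v
    using Vpsd[of v] Psiipd[OF that] by (simp add: S_def matrix_vector_mult_add_rdistrib inner_add_right)
  have Sinv: "invertible S" using Spd pd_invertible by blast
  have Mv: "M *v v = Gamma *v (Varc *v (transpose Gamma *v v)) + W *v v" for v
    by (simp only: M_def W_def mva matrix_vector_mult_add_rdistrib add.assoc)
  have Mpd: "v \<bullet> (M *v v) > 0" if "v \<noteq> 0" for v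
  proof -
    have "v \<bullet> (Gamma *v (Varc *v (transpose Gamma *v v))) \<ge> 0"
      using Vpsd by (metis dot_transpose transpose_transpose)
    then show ?thesis using Wpd[OF that] by (simp add: Mv inner_add_right)
  qed
  have Minv: "invertible M" using Mpd pd_invertible by blast
  have Vsum: "Vce + Vceta = Psii"
  proof -
    have "(Vce + Vceta) *v x = Psii *v x" for x
    proof -
      define p where "p = Wi *v (Gamma *v (Psii *v x))"
      have "(Vce + Vceta) *v x = Psii *v (transpose Gamma *v (Wi *v (W *v p)))"
        by (simp add: Vce_def Vceta_def mva matrix_vector_mult_add_rdistrib
            matrix_vector_right_distrib p_def Psiisym W_def)
      also have "\<dots> = Psii *v (Psi *v (Psii *v x))"
        by (simp add: Wi_def inv_apply_l[OF Winv] p_def Psiv)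
      also have "\<dots> = Psii *v x" unfolding Psii_def by (simp add: inv_apply_r[OF Psiinv])
      finally show ?thesis .
    qed
    then show ?thesis by (simp add: matrix_eq)
  qed
  have Psicz: "Psi *v cz = transpose Gamma *v (Wi *v z)"
    unfolding cz_def Psii_def by (simp add: inv_apply_r[OF Psiinv])
  have GWr: "transpose Gamma *v (Wi *v r) = 0"
    by (simp add: r_def matrix_vector_mult_diff_distrib Psiv[symmetric] Psicz)
  define w where "w = Psii *v (Si *v d)"
  define y where "y = Wi *v r + Wi *v (Gamma *v w)"
  have u: "z - Gamma *v Ec = r + Gamma *v d"
    by (simp add: r_def d_def matrix_vector_mult_diff_distrib)
  have My: "M *v y = r + Gamma *v d"
  proof -
    have WWi: "W *v (Wi *v v) = v" for v unfolding Wi_def by (rule inv_apply_r[OF Winv])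
    have "M *v y = Gamma *v (Varc *v (transpose Gamma *v (Wi *v r))) + r
        + Gamma *v (Varc *v (Psi *v w)) + Gamma *v w"
      by (simp add: Mv y_def matrix_vector_right_distrib WWi Psiv)
    also have "\<dots> = r + Gamma *v (Varc *v (Si *v d) + Psii *v (Si *v d))"
      by (simp add: GWr w_def Psii_def inv_apply_r[OF Psiinv] matrix_vector_right_distrib)
    also have "\<dots> = r + Gamma *v d"
      by (simp add: matrix_vector_mult_add_rdistrib[symmetric] S_def[symmetric] Si_def
          inv_apply_r[OF Sinv])
    finally show ?thesis .
  qed
  have My': "matrix_inv M *v (z - Gamma *v Ec) = y"
    using inv_solve[OF Minv My] u by simp
  have rW: "r \<bullet> (Wi *v (Gamma *v w)) = 0"
    by (metis GWr Wisym dot_transpose inner_zero_right inner_commute)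
  have dW: "(Gamma *v d) \<bullet> (Wi *v r) = 0"
    by (metis GWr dot_transpose inner_zero_right)
  have dd: "(Gamma *v d) \<bullet> (Wi *v (Gamma *v w)) = d \<bullet> (Si *v d)"
    by (metis Psiv dot_transpose w_def Psii_def inv_apply_r[OF Psiinv])
  have main: "qform (z - Gamma *v Ec) (matrix_inv M) = qform r Wi + qform d (matrix_inv (Varc + Vce + Vceta))"
  proof -
    have "Varc + Vce + Vceta = S" by (simp add: S_def add.assoc Vsum)
    then have "qform d (matrix_inv (Varc + Vce + Vceta)) = d \<bullet> (Si *v d)"
      by (simp add: qform_def Si_def)
    moreover have "qform (z - Gamma *v Ec) (matrix_inv M) = (r + Gamma *v d) \<bullet> y"
      by (simp add: qform_def My' u[symmetric])
    ultimately show ?thesis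
      by (simp add: qform_def y_def inner_add_left inner_add_right rW dW dd)
  qed
  show ?thesis
    using main unfolding Let_def M_def W_def Wi_def Psi_def Psii_def cz_def r_def d_def Vce_def Vceta_def
    by simp
qed

end
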